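(* For integers $M,N,m,l$ with $1\leq m\leq l<N$ and $M-m\geq N-l\geq 1$, the polynomial \[ {M\brack m}{N\brack l}-{M\brack m-1}{N\brack l+1} \] has nonnegative coefficients as a polynomial in $q$.
   Context: ${n\brack m}=\prod_{i=0}^{m-1}\frac{1-q^{n-i}}{1-q^{m-i}}$ denotes the Gaussian polynomial ($q$-binomial coefficient) for integers $n\ge m\ge0$. *)

theory Defs
  imports "HOL-Computational_Algebra.Polynomial"
begin

text \<open>Gaussian polynomial [n brack m] = prod_{i=0}^{m-1} (1-q^(n-i))/(1-q^(m-i)),
  as a polynomial in q with rational coefficients (the quotient is exact).\<close>
definition gauss_poly :: "nat \<Rightarrow> nat \<Rightarrow> rat poly" where
  "gauss_poly n m =
     (\<Prod>i<m. 1 - monom 1 (n - i)) div (\<Prod>i<m. 1 - monom 1 (m - i))"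

end

theory Submission
  imports Defs
begin

definition pX :: "rat poly" where "pX = [:0, 1:]"

lemma monom1_pX: "monom (1::rat) n = pX ^ n"
  by (simp add: monom_altdef pX_def)

fun qb :: "nat \<Rightarrow> nat \<Rightarrow> rat poly" where
  "qb n 0 = 1"
| "qb 0 (Suc k) = 0"
| "qb (Suc n) (Suc k) = qb n k + pX ^ (Suc k) * qb n (Suc k)"

fun qf :: "nat \<Rightarrow> rat poly" where
  "qf 0 = 1"
| "qf (Suc n) = qf n * (1 - pX ^ Suc n)"

lemma qb_zero: "n < k \<Longrightarrow> qb n k = 0"
proof (induction n arbitrary: k)
  case 0 then show ?case by (cases k) auto
next
  case (Suc n) then show ?case by (cases k) auto
qed

lemma qf_nz: "qf n \<noteq> 0"
proof (induction n)
  case 0 then show ?case by simp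
next
  case (Suc n)
  have "poly (1 - pX ^ Suc n) 0 \<noteq> 0" by (simp add: pX_def)
  then have "1 - pX ^ Suc n \<noteq> 0" by (metis poly_0)
  with Suc.IH show ?case by (simp only: qf.simps mult_eq_0_iff) simp
qed

lemma qb_fact: "k \<le> n \<Longrightarrow> qb n k * qf k * qf (n - k) = qf n"
proof (induction n arbitrary: k)
  case 0 then show ?case by simp
next
  case (Suc n)
  show ?case
  proof (cases k)
    case 0 then show ?thesis by simp
  next
    case (Suc j)
    with Suc.prems have jn: "j \<le> n" by simp
    have IH1: "qb n j * qf j * qf (n - j) = qf n" using Suc.IH jn by blast
    show ?thesis
    proof (cases "j < n")
      case True
      have IH2: "qb n (Suc j) * qf (Suc j) * qf (n - Suc j) = qf n"
        using Suc.IH[of "Suc j"] True by (meson Suc_leI)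
      have e: "n - j = Suc (n - Suc j)" using True by simp
      have pw: "pX ^ Suc j * pX ^ (n - j) = pX ^ Suc n"
      proof -
        have "Suc j + (n - j) = Suc n" using True by simp
        then show ?thesis by (metis power_add)
      qed
      have "qb (Suc n) k * qf k * qf (Suc n - k)
          = (qb n j + pX ^ Suc j * qb n (Suc j)) * (qf j * (1 - pX ^ Suc j)) * qf (n - j)"
        using Suc by simp
      also have "\<dots> = (qb n j * qf j * qf (n - j)) * (1 - pX ^ Suc j)
           + pX ^ Suc j * (qb n (Suc j) * qf (Suc j) * qf (n - Suc j)) * (1 - pX ^ (n - j))"
        by (simp add: e algebra_simps)
      also have "\<dots> = qf n * (1 - pX ^ Suc j) + pX ^ Suc j * qf n * (1 - pX ^ (n - j))"
        by (simp only: IH1 IH2)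
      also have "\<dots> = qf n * (1 - pX ^ Suc j * pX ^ (n - j))"
        by (simp add: algebra_simps)
      also have "\<dots> = qf (Suc n)" by (simp only: pw qf.simps)
      finally show ?thesis .
    next
      case False
      then have jn': "j = n" using jn by simp
      have "qb (Suc n) k * qf k * qf (Suc n - k)
          = (qb n n + pX ^ Suc n * qb n (Suc n)) * (qf n * (1 - pX ^ Suc n))"
        using Suc jn' by simp
      also have "\<dots> = qb n n * qf n * qf (n - n) * (1 - pX ^ Suc n)"
        by (simp add: qb_zero)
      also have "\<dots> = qf (Suc n)" using IH1 jn' by simp
      finally show ?thesis .
    qed
  qed
qed

lemma qb_sym: "k \<le> n \<Longrightarrow> qb n k = qb n (n - k)"
proof -
  assume kn: "k \<le> n"
  have "qb n k * (qf k * qf (n - k)) = qb n (n - k) * (qf k * qf (n - k))"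
    using qb_fact[OF kn] qb_fact[of "n - k" n] kn by (simp add: mult_ac)
  moreover have "qf k * qf (n - k) \<noteq> 0" using qf_nz by simp
  ultimately show ?thesis by simp
qed

lemma prod_num: "k \<le> n \<Longrightarrow> (\<Prod>i<k. 1 - monom (1::rat) (n - i)) * qf (n - k) = qf n"
proof (induction k)
  case 0 then show ?case by simp
next
  case (Suc k)
  have e: "n - k = Suc (n - Suc k)" using Suc.prems by simp
  have "(\<Prod>i<Suc k. 1 - monom (1::rat) (n - i)) * qf (n - Suc k)
      = (\<Prod>i<k. 1 - monom (1::rat) (n - i)) * (qf (n - Suc k) * (1 - pX ^ (n - k)))"
    by (simp add: monom1_pX mult_ac)
  also have "\<dots> = (\<Prod>i<k. 1 - monom (1::rat) (n - i)) * qf (n - k)"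
    by (simp only: e qf.simps)
  also have "\<dots> = qf n" using Suc by simp
  finally show ?case .
qed

lemma gauss_eq: "k \<le> n \<Longrightarrow> gauss_poly n k = qb n k"
proof -
  assume kn: "k \<le> n"
  have num: "(\<Prod>i<k. 1 - monom (1::rat) (n - i)) = qb n k * qf k"
  proof -
    have "(\<Prod>i<k. 1 - monom (1::rat) (n - i)) * qf (n - k) = (qb n k * qf k) * qf (n - k)"
      using prod_num[OF kn] qb_fact[OF kn] by simp
    then show ?thesis using qf_nz by simp
  qed
  have den: "(\<Prod>i<k. 1 - monom (1::rat) (k - i)) = qf k"
    using prod_num[of k k] by simp
  show ?thesis unfolding gauss_poly_def num den using qf_nz by simp
qed


definition g :: "int \<Rightarrow> int \<Rightarrow> rat poly" where
  "g x y = (if x < 0 \<or> y < 0 then 0 else qb (nat (x + y)) (nat x))"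

lemma g_neg: "x < 0 \<or> y < 0 \<Longrightarrow> g x y = 0"
  by (simp add: g_def)

lemma g_v: "x \<ge> 0 \<Longrightarrow> y \<ge> 0 \<Longrightarrow> x + y > 0 \<Longrightarrow> g x y = g (x - 1) y + pX ^ nat x * g x (y - 1)"
proof -
  assume x: "x \<ge> 0" and y: "y \<ge> 0" and s: "x + y > 0"
  show ?thesis
  proof (cases "x = 0")
    case True
    then show ?thesis using y s by (simp add: g_def)
  next
    case False
    then have x1: "x \<ge> 1" using x by simp
    have e1: "nat (x + y) = Suc (nat (x + y - 1))" using x1 y by simp
    have e2: "nat x = Suc (nat (x - 1))" using x1 by simp
    have "g x y = qb (nat (x + y - 1)) (nat (x - 1)) + pX ^ nat x * qb (nat (x + y - 1)) (nat x)"
      using x y by (simp add: g_def e1 e2 del: qb.simps) (simp only: qb.simps e2, simp)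
    moreover have "g (x - 1) y = qb (nat (x + y - 1)) (nat (x - 1))"
      using x1 y by (simp add: g_def algebra_simps)
    moreover have "g x (y - 1) = qb (nat (x + y - 1)) (nat x)"
    proof (cases "y = 0")
      case True
      then show ?thesis using x1 by (simp add: g_def qb_zero)
    next
      case False
      then show ?thesis using x1 y by (simp add: g_def algebra_simps)
    qed
    ultimately show ?thesis by simp
  qed
qed

lemma g_sym: "g x y = g y x"
proof (cases "x < 0 \<or> y < 0")
  case True then show ?thesis by (auto simp: g_def)
next
  case False
  then have "nat x \<le> nat (x + y)" "nat (x + y) - nat x = nat y" by auto
  then show ?thesis using False qb_sym[of "nat x" "nat (x + y)"] by (simp add: g_def add.commute)
qed

lemma g_h: "x \<ge> 0 \<Longrightarrow> y \<ge> 0 \<Longrightarrow> x + y > 0 \<Longrightarrow> g x y = pX ^ nat y * g (x - 1) y + g x (y - 1)"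
  using g_v[of y x] by (simp add: g_sym add.commute)

definition nonneg :: "rat poly \<Rightarrow> bool" where
  "nonneg p = (\<forall>i. coeff p i \<ge> 0)"

lemma nonneg_0: "nonneg 0" by (simp add: nonneg_def)
lemma nonneg_1: "nonneg 1" by (simp add: nonneg_def coeff_1)
lemma nonneg_add: "nonneg p \<Longrightarrow> nonneg q \<Longrightarrow> nonneg (p + q)"
  by (simp add: nonneg_def)
lemma nonneg_mult: "nonneg p \<Longrightarrow> nonneg q \<Longrightarrow> nonneg (p * q)"
  unfolding nonneg_def coeff_mult by (auto intro!: sum_nonneg)
lemma nonneg_pX: "nonneg (pX ^ n)"
  by (simp add: nonneg_def monom1_pX[symmetric] coeff_monom)
lemma nonneg_pX1: "nonneg pX"
  using nonneg_pX[of 1] by simp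
lemma nonneg_qb: "nonneg (qb n k)"
  by (induction n k rule: qb.induct) (auto intro: nonneg_add nonneg_mult nonneg_1 nonneg_0 nonneg_pX nonneg_pX1)
lemma nonneg_g: "nonneg (g x y)"
  by (simp add: g_def nonneg_0 nonneg_qb)

definition F :: "int \<Rightarrow> int \<Rightarrow> int \<Rightarrow> int \<Rightarrow> nat \<Rightarrow> rat poly" where
  "F m a l b k = g m a * g l b - pX ^ k * (g (m - 1) (a + 1) * g (l + 1) (b - 1))"



lemma alg1: fixes A C P Y K Q S Y' :: "rat poly"
  shows "(A*C + P)*Y - K*((A*Q*S + C)*Y') = A*(C*Y - (K*Q)*(S*Y')) + (P*Y - K*(C*Y'))"
  by (simp add: algebra_simps)

lemma alg2: fixes C M P Y K S M1 Y' K1 :: "rat poly"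
  assumes "K*M1 = M*K1"
  shows "(C + M*P)*Y - K*((S + M1*C)*Y') = (C*Y - K*(S*Y')) + M*(P*Y - K1*(C*Y'))"
proof -
  have "(C + M*P)*Y - K*((S + M1*C)*Y') = (C*Y - K*(S*Y')) + (M*P*Y - (K*M1)*(C*Y'))"
    by (simp add: algebra_simps)
  also have "\<dots> = (C*Y - K*(S*Y')) + M*(P*Y - K1*(C*Y'))"
    by (simp add: assms algebra_simps)
  finally show ?thesis .
qed

lemma alg3: fixes X R L E K X' Q T :: "rat poly"
  shows "X*(R + L*E) - K*(X'*(E + L*Q*T)) = (X*R - K*(X'*E)) + L*(X*E - (K*Q)*(X'*T))"
  by (simp add: algebra_simps)

lemma alg4: fixes X B R E K X' B1 T K1 :: "rat poly"
  assumes "K*B1 = B*K1"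
  shows "X*(B*R + E) - K*(X'*(B1*E + T)) = B*(X*R - K1*(X'*E)) + (X*E - K*(X'*T))"
proof -
  have "X*(B*R + E) - K*(X'*(B1*E + T)) = (B*(X*R) - (K*B1)*(X'*E)) + (X*E - K*(X'*T))"
    by (simp add: algebra_simps)
  also have "\<dots> = (B*(X*R) - (B*K1)*(X'*E)) + (X*E - K*(X'*T))"
    by (simp only: assms)
  also have "\<dots> = B*(X*R - K1*(X'*E)) + (X*E - K*(X'*T))"
    by (simp add: algebra_simps)
  finally show ?thesis .
qed

lemma rec_i:
  assumes "m \<ge> 1" "a \<ge> 0"
  shows "F m a l b k = pX ^ nat a * F (m - 1) a l b (k + 1) + F m (a - 1) l b k"
proof -
  have hX: "g m a = pX ^ nat a * g (m - 1) a + g m (a - 1)" using g_h[of m a] assms by simp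
  have hX': "g (m - 1) (a + 1) = pX ^ nat a * pX * g (m - 1 - 1) (a + 1) + g (m - 1) a"
    using g_h[of "m - 1" "a + 1"] assms by (simp add: nat_add_distrib mult_ac)
  have F1: "F (m - 1) a l b (k + 1) = g (m - 1) a * g l b - (pX ^ k * pX) * (g (m - 1 - 1) (a + 1) * g (l + 1) (b - 1))"
    unfolding F_def by (simp only: power_add power_one_right)
  have F2: "F m (a - 1) l b k = g m (a - 1) * g l b - pX ^ k * (g (m - 1) a * g (l + 1) (b - 1))"
    unfolding F_def by simp
  show ?thesis unfolding F1 F2 unfolding F_def hX hX' by (rule alg1)
qed

lemma rec_ii:
  assumes "m \<ge> 1" "a \<ge> 0" "k \<ge> 1"
  shows "F m a l b k = F (m - 1) a l b k + pX ^ nat m * F m (a - 1) l b (k - 1)"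
proof -
  have hX: "g m a = g (m - 1) a + pX ^ nat m * g m (a - 1)" using g_v[of m a] assms by simp
  have hX': "g (m - 1) (a + 1) = g (m - 1 - 1) (a + 1) + pX ^ nat (m - 1) * g (m - 1) a"
    using g_v[of "m - 1" "a + 1"] assms by simp
  have pw: "pX ^ k * pX ^ nat (m - 1) = pX ^ nat m * pX ^ (k - 1)"
  proof -
    have "k + nat (m - 1) = nat m + (k - 1)" using assms by simp
    then show ?thesis by (metis power_add)
  qed
  have F1: "F (m - 1) a l b k = g (m - 1) a * g l b - pX ^ k * (g (m - 1 - 1) (a + 1) * g (l + 1) (b - 1))"
    unfolding F_def by (rule refl)
  have F2: "F m (a - 1) l b (k - 1) = g m (a - 1) * g l b - pX ^ (k - 1) * (g (m - 1) a * g (l + 1) (b - 1))"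
    unfolding F_def by simp
  show ?thesis unfolding F1 F2 unfolding F_def hX hX' by (rule alg2[OF pw])
qed

lemma rec_iii:
  assumes "b \<ge> 1" "l \<ge> 0"
  shows "F m a l b k = F m a (l - 1) b k + pX ^ nat l * F m a l (b - 1) (k + 1)"
proof -
  have hY: "g l b = g (l - 1) b + pX ^ nat l * g l (b - 1)" using g_v[of l b] assms by simp
  have hY': "g (l + 1) (b - 1) = g l (b - 1) + pX ^ nat l * pX * g (l + 1) (b - 1 - 1)"
    using g_v[of "l + 1" "b - 1"] assms by (simp add: nat_add_distrib mult_ac)
  have F1: "F m a (l - 1) b k = g m a * g (l - 1) b - pX ^ k * (g (m - 1) (a + 1) * g l (b - 1))"
    unfolding F_def by simp
  have F2: "F m a l (b - 1) (k + 1) = g m a * g l (b - 1) - (pX ^ k * pX) * (g (m - 1) (a + 1) * g (l + 1) (b - 1 - 1))"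
    unfolding F_def by (simp only: power_add power_one_right)
  show ?thesis unfolding F1 F2 unfolding F_def hY hY' by (rule alg3)
qed

lemma rec_iv:
  assumes "b \<ge> 1" "l \<ge> 0" "k \<ge> 1"
  shows "F m a l b k = pX ^ nat b * F m a (l - 1) b (k - 1) + F m a l (b - 1) k"
proof -
  have hY: "g l b = pX ^ nat b * g (l - 1) b + g l (b - 1)" using g_h[of l b] assms by simp
  have hY': "g (l + 1) (b - 1) = pX ^ nat (b - 1) * g l (b - 1) + g (l + 1) (b - 1 - 1)"
    using g_h[of "l + 1" "b - 1"] assms by simp
  have pw: "pX ^ k * pX ^ nat (b - 1) = pX ^ nat b * pX ^ (k - 1)"
  proof -
    have "k + nat (b - 1) = nat b + (k - 1)" using assms by simp
    then show ?thesis by (metis power_add)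
  qed
  have F1: "F m a (l - 1) b (k - 1) = g m a * g (l - 1) b - pX ^ (k - 1) * (g (m - 1) (a + 1) * g l (b - 1))"
    unfolding F_def by simp
  have F2: "F m a l (b - 1) k = g m a * g l (b - 1) - pX ^ k * (g (m - 1) (a + 1) * g (l + 1) (b - 1 - 1))"
    unfolding F_def by (rule refl)
  show ?thesis unfolding F1 F2 unfolding F_def hY hY' by (rule alg4[OF pw])
qed


lemma triv: "m \<le> 0 \<or> b \<le> 0 \<Longrightarrow> nonneg (F m a l b k)"
proof -
  assume "m \<le> 0 \<or> b \<le> 0"
  then have "g (m - 1) (a + 1) * g (l + 1) (b - 1) = 0" by (auto simp: g_neg)
  then have "F m a l b k = g m a * g l b" by (simp add: F_def)
  then show ?thesis by (simp add: nonneg_mult nonneg_g)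
qed

lemma comb1: "nonneg p \<Longrightarrow> nonneg q \<Longrightarrow> nonneg (pX ^ j * p + q)"
  by (simp add: nonneg_add nonneg_mult nonneg_pX)
lemma comb2: "nonneg p \<Longrightarrow> nonneg q \<Longrightarrow> nonneg (p + pX ^ j * q)"
  by (simp add: nonneg_add nonneg_mult nonneg_pX)

lemma main:
  "m + a + l + b \<le> int n \<Longrightarrow> m - 1 \<le> l \<Longrightarrow> b - 1 \<le> a \<Longrightarrow> int k \<le> l - m + a - b + 2
   \<Longrightarrow> nonneg (F m a l b k)"
proof (induction n arbitrary: m a l b k)
  case 0
  then show ?case using triv by (cases "m \<le> 0 \<or> b \<le> 0") auto
next
  case (Suc n)
  show ?case
  proof (cases "m \<le> 0 \<or> b \<le> 0")
    case True then show ?thesis by (rule triv)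
  next
    case False
    then have m1: "m \<ge> 1" and b1: "b \<ge> 1" by auto
    with Suc.prems have a0: "a \<ge> 0" and l0: "l \<ge> 0" by auto
    show ?thesis
    proof (cases "k = 0")
      case k0: True
      show ?thesis
      proof (cases "a \<ge> b")
        case True
        have 1: "nonneg (F (m - 1) a l b (k + 1))"
          by (rule Suc.IH) (use Suc.prems True k0 in auto)
        have 2: "nonneg (F m (a - 1) l b k)"
          by (rule Suc.IH) (use Suc.prems True k0 in auto)
        show ?thesis unfolding rec_i[OF m1 a0] by (rule comb1[OF 1 2])
      next
        case ab: False
        show ?thesis
        proof (cases "l \<ge> m")
          case True
          have 1: "nonneg (F m a (l - 1) b k)"
            by (rule Suc.IH) (use Suc.prems True ab k0 in auto)
          have 2: "nonneg (F m a l (b - 1) (k + 1))"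
            by (rule Suc.IH) (use Suc.prems True ab k0 in auto)
          show ?thesis unfolding rec_iii[OF b1 l0] by (rule comb2[OF 1 2])
        next
          case False
          then have "l = m - 1" "b = a + 1" using Suc.prems ab by auto
          then have "F m a l b k = 0" using k0 by (simp add: F_def mult.commute)
          then show ?thesis by (simp add: nonneg_0)
        qed
      qed
    next
      case False
      then have k1: "k \<ge> 1" by simp
      have kk: "int (k - 1) = int k - 1" using k1 by simp
      show ?thesis
      proof (cases "a \<ge> b")
        case True
        have 1: "nonneg (F (m - 1) a l b k)"
          by (rule Suc.IH) (use Suc.prems True in auto)
        have 2: "nonneg (F m (a - 1) l b (k - 1))"
          by (rule Suc.IH) (use Suc.prems True kk in auto)
        show ?thesis unfolding rec_ii[OF m1 a0 k1] by (rule comb2[OF 1 2])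
      next
        case ab: False
        show ?thesis
        proof (cases "l \<ge> m")
          case True
          have 1: "nonneg (F m a (l - 1) b (k - 1))"
            by (rule Suc.IH) (use Suc.prems True ab kk in auto)
          have 2: "nonneg (F m a l (b - 1) k)"
            by (rule Suc.IH) (use Suc.prems True ab in auto)
          show ?thesis unfolding rec_iv[OF b1 l0 k1] by (rule comb1[OF 1 2])
        next
          case False
          then show ?thesis using Suc.prems ab k1 by auto
        qed
      qed
    qed
  qed
qed

theorem lemma3p1:
  fixes M N m l :: int
  assumes "1 \<le> m" and "m \<le> l" and "l < N" and "M - m \<ge> N - l" and "N - l \<ge> 1"
  shows "\<forall>k. coeff (gauss_poly (nat M) (nat m) * gauss_poly (nat N) (nat l)
                     - gauss_poly (nat M) (nat (m - 1)) * gauss_poly (nat N) (nat (l + 1))) k \<ge> 0"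
proof -
  define a where "a = M - m"
  define b where "b = N - l"
  have e1: "gauss_poly (nat M) (nat m) = g m a"
    using assms by (simp add: gauss_eq g_def a_def)
  have e2: "gauss_poly (nat N) (nat l) = g l b"
    using assms by (simp add: gauss_eq g_def b_def)
  have e3: "gauss_poly (nat M) (nat (m - 1)) = g (m - 1) (a + 1)"
    using assms by (simp add: gauss_eq g_def a_def)
  have e4: "gauss_poly (nat N) (nat (l + 1)) = g (l + 1) (b - 1)"
    using assms by (simp add: gauss_eq g_def b_def)
  have "nonneg (F m a l b 0)"
    by (rule main[of _ _ _ _ "nat (m + a + l + b)"]) (use assms a_def b_def in auto)
  then show ?thesis unfolding e1 e2 e3 e4 by (simp add: F_def nonneg_def)
qed

end
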